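(* For all integers $j\ge1$ and $k\ge0$, $$\sum_{i=0}^k(-1)^i\binom{k}{i}\binom{i/2}{j}=(-1)^j2^{k-2j}\frac{k}{j}\binom{2j-k-1}{j-k}.$$ (Moreover, for $j=k=0$ the sum equals $1$.)
   Context: For real $x$ and integer $m$: $\binom{x}{m}=x(x-1)\cdots(x-m+1)/m!$ if $m\ge1$, $\binom{x}{0}=1$, and $\binom{x}{m}=0$ if $m<0$. *)

theory Defs
  imports Complex_Main
begin

definition binom_ri :: "real \<Rightarrow> int \<Rightarrow> real" where
  "binom_ri x m = (if m < 0 then 0 else x gchoose (nat m))"

end

theory Submission
  imports Defs
begin


lemma pascal_ri: "binom_ri (x+1) m = binom_ri x m + binom_ri x (m-1)"
proof (cases "m < 0")
  case True then show ?thesis by (simp add: binom_ri_def)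
next
  case False
  show ?thesis
  proof (cases "m = 0")
    case True then show ?thesis by (simp add: binom_ri_def)
  next
    case False
    with \<open>\<not> m < 0\<close> obtain t where t: "m = int (Suc t)" by (metis not0_implies_Suc not_less zero_less_imp_eq_int zero_less_iff_neq_zero nat_int int_ops(1) less_le)
    then have "nat m = Suc t" "nat (m-1) = t" "\<not> m - 1 < 0" by auto
    then show ?thesis using t by (simp add: binom_ri_def gbinomial_Suc_Suc)
  qed
qed

definition Lf :: "nat \<Rightarrow> (nat \<Rightarrow> real) \<Rightarrow> real" where
  "Lf k f = (\<Sum>i=0..k. (-1::real)^i * real (k choose i) * f i)"

lemma Lf_Suc: "Lf (Suc k) f = Lf k (\<lambda>i. f i - f (Suc i))"
proof -
  have "Lf (Suc k) f = f 0 + (\<Sum>i=0..k. (-1::real)^(Suc i) * real (Suc k choose Suc i) * f (Suc i))"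
    unfolding Lf_def atLeast0AtMost by (subst sum.atMost_Suc_shift) simp
  also have "\<dots> = f 0 - (\<Sum>i=0..k. (-1::real)^i * real (k choose i) * f (Suc i))
       - (\<Sum>i=0..k. (-1::real)^i * real (k choose Suc i) * f (Suc i))"
  proof -
    have "(\<Sum>i=0..k. (-1::real)^(Suc i) * real (Suc k choose Suc i) * f (Suc i))
       = (\<Sum>i=0..k. - ((-1::real)^i * real (k choose i) * f (Suc i)) - (-1::real)^i * real (k choose Suc i) * f (Suc i))"
      by (rule sum.cong) (simp_all add: algebra_simps)
    then show ?thesis by (simp add: sum_subtractf sum_negf)
  qed
  also have "(\<Sum>i=0..k. (-1::real)^i * real (k choose Suc i) * f (Suc i))
      = - (\<Sum>i=1..k. (-1::real)^i * real (k choose i) * f i)"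
  proof -
    have "(\<Sum>i=0..k. (-1::real)^i * real (k choose Suc i) * f (Suc i))
        = (\<Sum>i=Suc 0..Suc k. (-1::real)^(i-1) * real (k choose i) * f i)"
      by (subst sum.shift_bounds_cl_Suc_ivl) simp
    also have "\<dots> = (\<Sum>i=1..k. (-1::real)^(i-1) * real (k choose i) * f i)"
      by (simp add: sum.cl_ivl_Suc)
    also have "\<dots> = - (\<Sum>i=1..k. (-1::real)^i * real (k choose i) * f i)"
      unfolding sum_negf[symmetric]
    apply (rule sum.cong, rule refl)
    subgoal for i by (cases i) auto
    done
    finally show ?thesis .
  qed
  also have "f 0 + (\<Sum>i=1..k. (-1::real)^i * real (k choose i) * f i) = (\<Sum>i=0..k. (-1::real)^i * real (k choose i) * f i)"
    by (simp add: sum.atLeast_Suc_atMost)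
  then have "f 0 - (\<Sum>i=0..k. (-1::real)^i * real (k choose i) * f (Suc i)) - - (\<Sum>i=1..k. (-1::real)^i * real (k choose i) * f i)
     = Lf k (\<lambda>i. f i - f (Suc i))"
    unfolding Lf_def by (simp add: sum_subtractf algebra_simps)
  finally show ?thesis .
qed

lemma Lf_lin: "Lf k (\<lambda>i. a * f i + g i) = a * Lf k f + Lf k g"
  unfolding Lf_def by (simp add: sum.distrib sum_distrib_left algebra_simps)

lemma Lf_const: "Lf k (\<lambda>i. c) = (if k = 0 then c else 0)"
proof (cases k)
  case 0 then show ?thesis by (simp add: Lf_def)
next
  case (Suc n) then show ?thesis by (simp add: Lf_Suc) (simp add: Lf_def)
qed

definition b :: "nat \<Rightarrow> nat \<Rightarrow> real" where
  "b j i = binom_ri (real i / 2) (int j)"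

lemma b_step: "b (Suc j) (Suc (Suc i)) = b (Suc j) i + b j i"
proof -
  have eq: "real (Suc (Suc i)) / 2 = real i / 2 + 1" by simp
  show ?thesis unfolding b_def eq pascal_ri by simp
qed

lemma L_rec: "Lf (Suc (Suc k)) (b (Suc j)) = 2 * Lf (Suc k) (b (Suc j)) + Lf k (b j)"
proof -
  have "Lf (Suc (Suc k)) (b (Suc j)) = Lf k (\<lambda>i. (b (Suc j) i - b (Suc j) (Suc i)) - (b (Suc j) (Suc i) - b (Suc j) (Suc (Suc i))))"
    by (simp only: Lf_Suc)
  also have "\<dots> = Lf k (\<lambda>i. 2 * (b (Suc j) i - b (Suc j) (Suc i)) + b j i)"
    by (rule arg_cong[where f="Lf k"]) (auto simp: b_step)
  also have "\<dots> = 2 * Lf k (\<lambda>i. b (Suc j) i - b (Suc j) (Suc i)) + Lf k (b j)"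
    by (rule Lf_lin)
  also have "\<dots> = 2 * Lf (Suc k) (b (Suc j)) + Lf k (b j)"
    by (simp only: Lf_Suc)
  finally show ?thesis .
qed



definition G :: "nat \<Rightarrow> nat \<Rightarrow> real" where
  "G k j = (-1::real)^j * 2 powi (int k - 2*int j) *
     (binom_ri (of_int (2*int j - int k - 1)) (int j - int k) - binom_ri (of_int (2*int j - int k - 1)) (int j - int k - 1))"

lemma G_rec: "G (Suc (Suc k)) (Suc j) = 2 * G (Suc k) (Suc j) + G k j"
proof -
  define x :: real where "x = of_int (2*int j - int k - 1)"
  define m :: int where "m = int j - int k - 1"
  define P :: real where "P = 2 powi (int k - 2*int j)"
  have P2: "2 * 2 powi (int (Suc k) - 2*int (Suc j)) = P"
  proof -
    have "P = 2 powi ((int (Suc k) - 2*int (Suc j)) + 1)"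
      unfolding P_def by (rule arg_cong[where f="power_int 2"]) simp
    also have "\<dots> = 2 powi (int (Suc k) - 2*int (Suc j)) * 2 powi 1"
      by (rule power_int_add) simp
    finally show ?thesis by simp
  qed
  have g1: "G (Suc (Suc k)) (Suc j) = - ((-1)^j * P * (binom_ri x m - binom_ri x (m-1)))"
  proof -
    have a: "int (Suc (Suc k)) - 2*int (Suc j) = int k - 2*int j" by simp
    have b1: "(of_int (2*int (Suc j) - int (Suc (Suc k)) - 1)::real) = x" unfolding x_def by simp
    have c: "int (Suc j) - int (Suc (Suc k)) = m" unfolding m_def by simp
    show ?thesis unfolding G_def a b1 c P_def by simp
  qed
  have g2: "2 * G (Suc k) (Suc j) = - ((-1)^j * P * (binom_ri (x+1) (m+1) - binom_ri (x+1) m))"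
  proof -
    have b1: "(of_int (2*int (Suc j) - int (Suc k) - 1)::real) = x + 1" unfolding x_def by simp
    have c: "int (Suc j) - int (Suc k) = m + 1" unfolding m_def by simp
    show ?thesis unfolding G_def b1 c P2[symmetric] by simp
  qed
  have g3: "G k j = (-1)^j * P * (binom_ri x (m+1) - binom_ri x m)"
  proof -
    have c: "int j - int k = m + 1" unfolding m_def by simp
    show ?thesis unfolding G_def c x_def[symmetric] P_def by simp
  qed
  show ?thesis unfolding g1 g2 g3 pascal_ri by (simp add: algebra_simps)
qed

lemma G_0: "G k 0 = (if k = 0 then 1 else 0)"
  by (simp add: G_def binom_ri_def)

lemma T_lemma:
  assumes "j \<ge> 1"
  shows "binom_ri (of_int (2*int j - int k - 1)) (int j - int k) - binom_ri (of_int (2*int j - int k - 1)) (int j - int k - 1)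
     = (real k / real j) * binom_ri (of_int (2*int j - int k - 1)) (int j - int k)"
proof (cases "k > j")
  case True then show ?thesis by (simp add: binom_ri_def)
next
  case False
  show ?thesis
  proof (cases "k = j")
    case True then show ?thesis using assms by (simp add: binom_ri_def)
  next
    case False
    with \<open>\<not> k > j\<close> obtain t where t: "j = k + Suc t" by (metis add_Suc_right less_imp_Suc_add linorder_neqE_nat)
    define x :: real where "x = real (j + t)"
    have ex: "(of_int (2*int j - int k - 1)::real) = x" unfolding x_def t by simp
    have e1: "int j - int k = int (Suc t)" using t by simp
    have e2: "int j - int k - 1 = int t" using t by simp
    have key: "real (Suc t) * (x gchoose Suc t) = real j * (x gchoose t)"
      using gbinomial_mult_1[of x t] unfolding x_def by (simp add: algebra_simps)
    have jpos: "real j > 0" using assms by simp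
    have "(x gchoose t) = real (Suc t) / real j * (x gchoose Suc t)"
      using key jpos by (simp add: field_simps)
    then have "(x gchoose Suc t) - (x gchoose t) = (real k / real j) * (x gchoose Suc t)"
      using jpos unfolding t by (simp add: field_simps)
    then show ?thesis unfolding ex e1 e2 binom_ri_def nat_int by simp
  qed
qed


declare binomial_Suc_Suc[simp del]

lemma central_rec: "Suc n * (Suc (Suc (2*n)) choose Suc n) = 2 * (Suc (2*n)) * (2*n choose n)"
proof -
  have h1: "Suc n * (Suc (Suc (2*n)) choose Suc n) = Suc (Suc (2*n)) * (Suc (2*n) choose n)"
    by (rule Suc_times_binomial)
  have sym: "Suc (2*n) choose n = Suc (2*n) choose Suc n"
  proof -
    have "Suc (2*n) choose n = Suc (2*n) choose (Suc (2*n) - n)" by (rule binomial_symmetric) simp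
    moreover have "Suc (2*n) - n = Suc n" by simp
    ultimately show ?thesis by simp
  qed
  have h2: "Suc n * (Suc (2*n) choose Suc n) = Suc (2*n) * (2*n choose n)"
    by (rule Suc_times_binomial)
  have "Suc n * (Suc n * (Suc (Suc (2*n)) choose Suc n)) = Suc n * (2 * (Suc (2*n)) * (2*n choose n))"
  proof -
    have "Suc n * (Suc n * (Suc (Suc (2*n)) choose Suc n)) = Suc (Suc (2*n)) * (Suc n * (Suc (2*n) choose Suc n))"
      using h1 sym by (metis mult.left_commute)
    also have "\<dots> = Suc (Suc (2*n)) * (Suc (2*n) * (2*n choose n))" using h2 by simp
    also have "\<dots> = Suc n * (2 * (Suc (2*n)) * (2*n choose n))" by simp
    finally show ?thesis .
  qed
  then show ?thesis by (subst (asm) mult_left_cancel) simp_all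
qed

lemma aux_alg:
  fixes P N s Z :: real assumes "P > 0" "N \<ge> 0"
  shows "(1/2 - (N+1)) * (s*Z/(2*P*(N+1)))/(N+2) = -s * (2*(2*N+1)*Z/(N+1)) / (8*P*(N+2))"
proof -
  have h: "N + 1 \<noteq> 0" "N + 2 \<noteq> 0" "P \<noteq> 0" using assms by auto
  have "(1/2 - (N+1)) * (s*Z/(2*P*(N+1)))/(N+2) = (-(2*N+1)*s*Z) / (4*P*(N+1)*(N+2))"
    using h by (simp add: divide_simps)
  also have "\<dots> = -s * (2*(2*N+1)*Z/(N+1)) / (8*P*(N+2))"
    using h by (simp add: divide_simps) (simp add: algebra_simps)
  finally show ?thesis .
qed

lemma half_gchoose: "(1/2::real) gchoose Suc n = (-1)^n * real (2*n choose n) / (2^(2*n+1) * real (Suc n))"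
proof (induction n)
  case 0 then show ?case by simp
next
  case (Suc n)
  have m: "real (Suc (Suc n)) * ((1/2::real) gchoose Suc (Suc n)) = (1/2 - real (Suc n)) * ((1/2::real) gchoose Suc n)"
    using gbinomial_mult_1[of "1/2::real" "Suc n"] by (simp add: algebra_simps)
  have c: "real (Suc n) * real (Suc (Suc (2*n)) choose Suc n) = 2 * (2 * real n + 1) * real (2*n choose n)"
    using arg_cong[OF central_rec[of n], of real] by (simp add: algebra_simps)
  have "(1/2::real) gchoose Suc (Suc n) = (1/2 - real (Suc n)) * ((1/2::real) gchoose Suc n) / real (Suc (Suc n))"
    using m by (simp add: field_simps)
  also have "\<dots> = (1/2 - real (Suc n)) * ((-1)^n * real (2*n choose n) / (2^(2*n+1) * real (Suc n))) / real (Suc (Suc n))"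
    using Suc.IH by simp
  also have "\<dots> = (-1)^(Suc n) * real (2*Suc n choose Suc n) / (2^(2*Suc n+1) * real (Suc (Suc n)))"
  proof -
    have e: "2 * Suc n = Suc (Suc (2*n))" by simp
    have r: "real (Suc (Suc (2*n)) choose Suc n) = 2 * (2 * real n + 1) * real (2*n choose n) / real (Suc n)"
      using c by (simp add: field_simps)
    have "(2::real)^(2*Suc n+1) = 8 * 2^(2*n)" "(2::real)^(2*n+1) = 2 * 2^(2*n)" by (simp_all add: power_add)
    then show ?thesis unfolding e r using aux_alg[of "2^(2*n)" "real n" "(-1)^n" "real (2*n choose n)"]
      by (simp add: algebra_simps)

  qed
  finally show ?case .
qed



lemma G0S: "G 0 (Suc n) = 0"
proof -
  have ex: "(of_int (2*int (Suc n) - int 0 - 1)::real) = of_nat (2*n+1)" by simp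
  have e1: "int (Suc n) - int 0 = int (Suc n)" by simp
  have e2: "int (Suc n) - int 0 - 1 = int n" by simp
  have "(of_nat (2*n+1)::real) gchoose Suc n = of_nat (2*n+1) gchoose (2*n+1 - Suc n)"
    by (rule gbinomial_of_nat_symmetric) simp
  then have "(of_nat (2*n+1)::real) gchoose Suc n = of_nat (2*n+1) gchoose n" by simp
  then show ?thesis unfolding G_def ex e1 e2 binom_ri_def nat_int by simp
qed

lemma G1S: "G 1 (Suc n) = - ((1/2::real) gchoose Suc n)"
proof -
  have "G 1 (Suc n) = (-1::real)^(Suc n) * 2 powi (int 1 - 2*int (Suc n)) *
     ((real 1 / real (Suc n)) * binom_ri (of_int (2*int (Suc n) - int 1 - 1)) (int (Suc n) - int 1))"
    using T_lemma[of "Suc n" 1] unfolding G_def by (simp only: Suc_le_mono le0 simp_thms)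
  also have "\<dots> = (-1::real)^(Suc n) * (1 / 2^(2*n+1)) * ((1 / real (Suc n)) * real (2*n choose n))"
  proof -
    have a: "int 1 - 2*int (Suc n) = - int (2*n+1)" by simp
    have p: "(2::real) powi (- int (2*n+1)) = 1 / 2^(2*n+1)"
      unfolding power_int_minus power_int_of_nat by (simp add: inverse_eq_divide)
    have c: "(of_int (2*int (Suc n) - int 1 - 1)::real) = of_nat (2*n)" by simp
    have d: "int (Suc n) - int 1 = int n" by simp
    show ?thesis unfolding a p c d binom_ri_def nat_int binomial_gbinomial by simp
  qed
  also have "\<dots> = - ((1/2::real) gchoose Suc n)"
    unfolding half_gchoose by (simp add: divide_simps)
  finally show ?thesis .
qed

lemma b0: "b 0 i = 1" by (simp add: b_def binom_ri_def)

lemma Lf_G: "Lf k (b j) = G k j \<and> Lf (Suc k) (b j) = G (Suc k) j"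
proof (induction k arbitrary: j)
  case 0
  have A: "Lf 0 (b j) = G 0 j"
  proof (cases j)
    case 0 then show ?thesis by (simp add: Lf_def b0 G_0)
  next
    case (Suc n) then show ?thesis by (simp add: Lf_def b_def binom_ri_def gbinomial_0_left G0S)
  qed
  have B: "Lf 1 (b j) = G 1 j"
  proof (cases j)
    case 0 then show ?thesis by (simp add: Lf_def b0 G_0)
  next
    case (Suc n)
    have l: "Lf 1 (b (Suc n)) = b (Suc n) 0 - b (Suc n) 1" by (simp add: Lf_def)
    have b1: "b (Suc n) 0 = 0" unfolding b_def binom_ri_def nat_int by (simp add: gbinomial_0_left)
    have b2: "b (Suc n) 1 = (1/2::real) gchoose Suc n" unfolding b_def binom_ri_def nat_int by simp
    show ?thesis unfolding Suc l b1 b2 G1S by simp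
  qed
  show ?case using A B by simp
next
  case (Suc k)
  have "Lf (Suc (Suc k)) (b j) = G (Suc (Suc k)) j"
  proof (cases j)
    case 0
    have "b 0 = (\<lambda>i. 1)" by (rule ext) (rule b0)
    then show ?thesis using 0 by (simp add: Lf_const G_0)
  next
    case (Suc n) then show ?thesis using Suc.IH[of "Suc n"] Suc.IH[of n] by (simp add: L_rec G_rec)
  qed
  then show ?case using Suc.IH by simp
qed

theorem mainTheorem3:
  shows "(\<forall>(j::nat) (k::nat). j \<ge> 1 \<longrightarrow>
            (\<Sum>i=0..k. (-1::real)^i * real (k choose i) * binom_ri (real i / 2) (int j))
            = (-1::real)^j * (2::real) powi (int k - 2 * int j) * (real k / real j)
                * binom_ri (of_int (2 * int j - int k - 1)) (int j - int k))
       \<and> (\<Sum>i=0..(0::nat). (-1::real)^i * real (0 choose i) * binom_ri (real i / 2) 0) = 1"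
proof (intro conjI allI impI)
  fix j k :: nat assume j: "j \<ge> 1"
  have "(\<Sum>i=0..k. (-1::real)^i * real (k choose i) * binom_ri (real i / 2) (int j)) = Lf k (b j)"
    unfolding Lf_def b_def ..
  also have "\<dots> = G k j" using Lf_G by blast
  also have "\<dots> = (-1::real)^j * (2::real) powi (int k - 2 * int j) * (real k / real j)
                * binom_ri (of_int (2 * int j - int k - 1)) (int j - int k)"
    unfolding G_def T_lemma[OF j] by (simp only: mult.assoc)
  finally show "(\<Sum>i=0..k. (-1::real)^i * real (k choose i) * binom_ri (real i / 2) (int j))
            = (-1::real)^j * (2::real) powi (int k - 2 * int j) * (real k / real j)
                * binom_ri (of_int (2 * int j - int k - 1)) (int j - int k)" .
next
  show "(\<Sum>i=0..(0::nat). (-1::real)^i * real (0 choose i) * binom_ri (real i / 2) 0) = 1"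
    by (simp add: binom_ri_def)
qed

end
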